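(* Let $k\ge 2$, $n\neq 2k$, $G\in\mathcal{M}_k(n,s)$, and let $i<j$ be vertices of $G$. Then: (i) if $\mathrm{sh}_{ij}(G)\in\mathrm{Cov}_k(n,s)$, then $G\in\mathrm{Cov}_k(n,s)$; (ii) if $\mathrm{sh}_{ij}(G)\in\mathrm{Cl}_k(n,s)$, then $G\in\mathrm{Cl}_k(n,s)$.
   Context: A $k$-uniform hypergraph ($k$-graph) $G=(V,E)$ consists of a finite vertex set $V\subseteq\mathbb{N}$ and a family $E$ of $k$-element subsets of $V$ (edges). A matching is a family of pairwise disjoint edges; $\mu(G)$ is the size of a largest matching in $G$. Let $\mathcal{H}_k(n,s)$ be the set of all $k$-graphs $G=(V,E)$ with $|V|=n$ and $\mu(G)=s$; let $\mu_k(n,s)=\max\{|E(G)|: G\in\mathcal{H}_k(n,s)\}$ and $\mathcal{M}_k(n,s)=\{G\in\mathcal{H}_k(n,s): |E(G)|=\mu_k(n,s)\}$. $\mathrm{Cov}_k(n,s)$ is the family of $k$-graphs $G=(V,E)$ with $|V|=n$ such that for some $S\subseteq V$ with $|S|=s$, $E=\{e\subseteq V: |e|=k,\ e\cap S\neq\emptyset\}$. $\mathrm{Cl}_k(n,s)$ is the family of $k$-graphs $G=(V,E)$ with $|V|=n$ such that for some $T\subseteq V$ with $|T|=ks+k-1$, $E=\{e\subseteq T: |e|=k\}$. For vertices $i<j$, the $(i,j)$-shift $\mathrm{sh}_{ij}(G)$ is the $k$-graph on $V$ obtained from $G$ by replacing each edge $e\in E$ with $j\in e$, $i\notin e$ and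 $(e\setminus\{j\})\cup\{i\}\notin E$ by the set $(e\setminus\{j\})\cup\{i\}$ (all other edges are kept). *)

theory Defs
  imports Main
begin

type_synonym hgraph = "nat set \<times> nat set set"

definition kgraph :: "nat \<Rightarrow> hgraph \<Rightarrow> bool" where
  "kgraph k G \<longleftrightarrow> finite (fst G) \<and> (\<forall>e\<in>snd G. e \<subseteq> fst G \<and> card e = k)"

definition matching :: "nat set set \<Rightarrow> bool" where
  "matching M \<longleftrightarrow> pairwise disjnt M"

definition matching_number :: "hgraph \<Rightarrow> nat" where
  "matching_number G = Max {card M | M. M \<subseteq> snd G \<and> matching M}"

definition Hk :: "nat \<Rightarrow> nat \<Rightarrow> nat \<Rightarrow> hgraph set" where
  "Hk k n s = {G. kgraph k G \<and> card (fst G) = n \<and> matching_number G = s}"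

definition muk :: "nat \<Rightarrow> nat \<Rightarrow> nat \<Rightarrow> nat" where
  "muk k n s = Max ((\<lambda>G. card (snd G)) ` Hk k n s)"

definition Mk :: "nat \<Rightarrow> nat \<Rightarrow> nat \<Rightarrow> hgraph set" where
  "Mk k n s = {G \<in> Hk k n s. card (snd G) = muk k n s}"

definition Cov :: "nat \<Rightarrow> nat \<Rightarrow> nat \<Rightarrow> hgraph set" where
  "Cov k n s = {(V, E). finite V \<and> card V = n \<and>
     (\<exists>S. S \<subseteq> V \<and> card S = s \<and> E = {e. e \<subseteq> V \<and> card e = k \<and> e \<inter> S \<noteq> {}})}"

definition Cl :: "nat \<Rightarrow> nat \<Rightarrow> nat \<Rightarrow> hgraph set" where
  "Cl k n s = {(V, E). finite V \<and> card V = n \<and>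
     (\<exists>T. T \<subseteq> V \<and> card T = k * s + k - 1 \<and> E = {e. e \<subseteq> T \<and> card e = k})}"

definition shift :: "nat \<Rightarrow> nat \<Rightarrow> hgraph \<Rightarrow> hgraph" where
  "shift i j G = (let V = fst G; E = snd G;
      moved = (\<lambda>e. j \<in> e \<and> i \<notin> e \<and> insert i (e - {j}) \<notin> E)
    in (V, {e \<in> E. \<not> moved e} \<union> {insert i (e - {j}) | e. e \<in> E \<and> moved e}))"

end

theory Submission
  imports Defs
begin


definition shE :: "nat \<Rightarrow> nat \<Rightarrow> nat set set \<Rightarrow> nat set set" where
  "shE i j E = {e \<in> E. \<not> (j \<in> e \<and> i \<notin> e \<and> insert i (e - {j}) \<notin> E)} \<union>
     {insert i (e - {j}) | e. e \<in> E \<and> (j \<in> e \<and> i \<notin> e \<and> insert i (e - {j}) \<notin> E)}"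

lemma shift_eq: "shift i j G = (fst G, shE i j (snd G))"
  by (simp add: shift_def shE_def Let_def)

lemma sh_nn: "i \<notin> e \<Longrightarrow> j \<notin> e \<Longrightarrow> e \<in> shE i j E \<longleftrightarrow> e \<in> E"
  unfolding shE_def by auto

lemma sh_bb: "i \<noteq> j \<Longrightarrow> i \<in> e \<Longrightarrow> j \<in> e \<Longrightarrow> e \<in> shE i j E \<longleftrightarrow> e \<in> E"
  unfolding shE_def by auto

lemma sh_b: "i \<noteq> j \<Longrightarrow> i \<notin> A \<Longrightarrow> j \<notin> A \<Longrightarrow>
   insert j A \<in> shE i j E \<longleftrightarrow> insert j A \<in> E \<and> insert i A \<in> E"
proof -
  assume h: "i \<noteq> j" "i \<notin> A" "j \<notin> A"
  have "insert j A - {j} = A" using h by auto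
  then show ?thesis unfolding shE_def using h by auto
qed

lemma sh_a: "i \<noteq> j \<Longrightarrow> i \<notin> A \<Longrightarrow> j \<notin> A \<Longrightarrow>
   insert i A \<in> shE i j E \<longleftrightarrow> insert i A \<in> E \<or> insert j A \<in> E"
proof -
  assume h: "i \<noteq> j" "i \<notin> A" "j \<notin> A"
  have 1: "insert j A - {j} = A" using h by auto
  show ?thesis
  proof
    assume "insert i A \<in> shE i j E"
    then consider "insert i A \<in> E" | e where "e \<in> E" "j \<in> e" "i \<notin> e" "insert i A = insert i (e - {j})"
      unfolding shE_def by blast
    then show "insert i A \<in> E \<or> insert j A \<in> E"
    proof cases
      case 2
      have "A = e - {j}" using 2 h by (subst (asm) insert_ident) auto
      then have "e = insert j A" using 2 by auto
      then show ?thesis using 2 by auto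
    qed auto
  next
    assume "insert i A \<in> E \<or> insert j A \<in> E"
    then show "insert i A \<in> shE i j E"
    proof
      assume "insert i A \<in> E" then show ?thesis unfolding shE_def by blast
    next
      assume b: "insert j A \<in> E"
      show ?thesis
      proof (cases "insert i A \<in> E")
        case True then show ?thesis unfolding shE_def by blast
      next
        case False
        have "insert i A = insert i (insert j A - {j})" using 1 by simp
        moreover have "j \<in> insert j A \<and> i \<notin> insert j A \<and> insert i (insert j A - {j}) \<notin> E"
          using False h 1 by simp
        ultimately show ?thesis unfolding shE_def using b by blast
      qed
    qed
  qed
qed

lemma shE_id: "(\<And>A. i \<notin> A \<Longrightarrow> j \<notin> A \<Longrightarrow> insert j A \<in> E \<Longrightarrow> insert i A \<in> E) \<Longrightarrow> shE i j E = E"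
proof -
  assume h: "\<And>A. i \<notin> A \<Longrightarrow> j \<notin> A \<Longrightarrow> insert j A \<in> E \<Longrightarrow> insert i A \<in> E"
  have "\<not> (j \<in> e \<and> i \<notin> e \<and> insert i (e - {j}) \<notin> E)" if "e \<in> E" for e
  proof
    assume a: "j \<in> e \<and> i \<notin> e \<and> insert i (e - {j}) \<notin> E"
    then have "insert j (e - {j}) \<in> E" using that by (simp add: insert_absorb)
    then show False using h[of "e - {j}"] a by auto
  qed
  then show ?thesis unfolding shE_def by auto
qed

lemma shE_sym: "i \<noteq> j \<Longrightarrow> (\<And>A. i \<notin> A \<Longrightarrow> j \<notin> A \<Longrightarrow> insert i A \<in> shE i j E \<longleftrightarrow> insert j A \<in> shE i j E) \<Longrightarrow> shE i j E = E"
  by (rule shE_id) (metis sh_a sh_b)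

lemma sh_ba: "i \<noteq> j \<Longrightarrow> i \<notin> A \<Longrightarrow> j \<notin> A \<Longrightarrow> insert j A \<in> shE i j E \<Longrightarrow> insert i A \<in> shE i j E"
  by (metis sh_a sh_b)

lemma shE_card: assumes "finite E" "i \<noteq> j" shows "card (shE i j E) = card E"
proof -
  define mv where "mv e \<longleftrightarrow> (j \<in> e \<and> i \<notin> e \<and> insert i (e - {j}) \<notin> E)" for e
  define f where "f e = insert i (e - {j})" for e
  define U where "U = {e \<in> E. \<not> mv e}"
  define Mv where "Mv = {e \<in> E. mv e}"
  have eq: "shE i j E = U \<union> f ` Mv" unfolding shE_def U_def Mv_def mv_def f_def by auto
  have d: "U \<inter> f ` Mv = {}" unfolding U_def Mv_def mv_def f_def by auto
  have inj: "inj_on f Mv"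
  proof (rule inj_onI)
    fix x y assume "x \<in> Mv" "y \<in> Mv" "f x = f y"
    then have "j \<in> x" "i \<notin> x" "j \<in> y" "i \<notin> y" "insert i (x - {j}) = insert i (y - {j})"
      unfolding Mv_def mv_def f_def by auto
    then have "x - {j} = y - {j}" by (simp add: insert_ident)
    then show "x = y" using \<open>j \<in> x\<close> \<open>j \<in> y\<close> by (metis insert_Diff)
  qed
  have fU: "finite U" and fM: "finite Mv" unfolding U_def Mv_def using assms by auto
  have "card (shE i j E) = card U + card (f ` Mv)"
    unfolding eq using d fU fM by (intro card_Un_disjoint) auto
  also have "card (f ` Mv) = card Mv" using inj by (rule card_image)
  also have "card U + card Mv = card E"
  proof -
    have "E = U \<union> Mv" "U \<inter> Mv = {}" unfolding U_def Mv_def by auto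
    then show ?thesis using fU fM card_Un_disjoint by metis
  qed
  finally show ?thesis .
qed

lemma card_ins_eq: "i \<notin> A \<Longrightarrow> j \<notin> A \<Longrightarrow> card (insert i A) = card (insert j A)"
  by (cases "finite A") auto



lemma kg_fin: "kgraph k G \<Longrightarrow> finite (snd G)"
  unfolding kgraph_def by (meson finite_Pow_iff finite_subset subsetI PowI)

lemma mn_set_fin: "kgraph k G \<Longrightarrow> finite {card M | M. M \<subseteq> snd G \<and> matching M}"
proof -
  assume "kgraph k G"
  then have f: "finite (snd G)" by (rule kg_fin)
  have "{card M | M. M \<subseteq> snd G \<and> matching M} \<subseteq> {..card (snd G)}"
    using f card_mono by auto
  then show ?thesis using finite_subset by blast
qed

lemma mn_ge: "kgraph k G \<Longrightarrow> M \<subseteq> snd G \<Longrightarrow> matching M \<Longrightarrow> card M \<le> matching_number G"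
  unfolding matching_number_def using mn_set_fin by (intro Max_ge) auto

lemma mn_obt: "kgraph k G \<Longrightarrow> \<exists>M. M \<subseteq> snd G \<and> matching M \<and> card M = matching_number G"
proof -
  assume kg: "kgraph k G"
  have "matching {}" unfolding matching_def by simp
  then have ne: "{card M | M. M \<subseteq> snd G \<and> matching M} \<noteq> {}" by blast
  have "matching_number G \<in> {card M | M. M \<subseteq> snd G \<and> matching M}"
    unfolding matching_number_def using Max_in[OF mn_set_fin[OF kg] ne] .
  then show ?thesis by auto
qed

lemma ksub_card: "finite V \<Longrightarrow> card {e. e \<subseteq> V \<and> card e = k} = card V choose k"
  by (rule n_subsets)

lemma card_le_muk: "H \<in> Hk k n s \<Longrightarrow> card (snd H) \<le> muk k n s"
proof -
  assume H: "H \<in> Hk k n s"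
  have bnd: "card (snd G) \<le> n choose k" if "G \<in> Hk k n s" for G
  proof -
    have kg: "kgraph k G" and cn: "card (fst G) = n" using that unfolding Hk_def by auto
    have fv: "finite (fst G)" using kg unfolding kgraph_def by auto
    have "snd G \<subseteq> {e. e \<subseteq> fst G \<and> card e = k}" using kg unfolding kgraph_def by auto
    moreover have "finite {e. e \<subseteq> fst G \<and> card e = k}" using fv by auto
    ultimately have "card (snd G) \<le> card {e. e \<subseteq> fst G \<and> card e = k}" by (rule card_mono[rotated])
    then show ?thesis using ksub_card[OF fv] cn by simp
  qed
  have "(\<lambda>G. card (snd G)) ` Hk k n s \<subseteq> {..n choose k}" using bnd by auto
  then have "finite ((\<lambda>G. card (snd G)) ` Hk k n s)" using finite_subset by blast
  then show ?thesis unfolding muk_def using H by (intro Max_ge) auto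
qed

lemma choose_mono_top: "m \<le> n \<Longrightarrow> m choose r \<le> n choose r"
proof (induction n)
  case 0 then show ?case by simp
next
  case (Suc n)
  show ?case
  proof (cases "m = Suc n")
    case False
    then have "m choose r \<le> n choose r" using Suc by simp
    also have "n choose r \<le> Suc n choose r" by (cases r) auto
    finally show ?thesis .
  qed simp
qed

lemma kneser_close:
  assumes W: "finite W" "card W \<ge> 2*r+1"
    and A: "A \<subseteq> W" "card A = r" "P A" and C: "C \<subseteq> W" "card C = r" "\<not> P C"
    and u: "card (A \<union> C) \<le> r + 1"
  shows "\<exists>X Y. X \<subseteq> W \<and> Y \<subseteq> W \<and> card X = r \<and> card Y = r \<and> X \<inter> Y = {} \<and> \<not> P X \<and> P Y"
proof -
  have "card (W - (A \<union> C)) \<ge> r"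
  proof -
    have "card (W - (A \<union> C)) = card W - card (A \<union> C)"
      using A C W by (intro card_Diff_subset) (auto intro: finite_subset)
    then show ?thesis using u W by simp
  qed
  then obtain D where D: "D \<subseteq> W - (A \<union> C)" "card D = r" by (meson obtain_subset_with_card_n)
  show ?thesis
  proof (cases "P D")
    case True
    then show ?thesis using D C by (intro exI[of _ C] exI[of _ D]) auto
  next
    case False
    then show ?thesis using D A by (intro exI[of _ D] exI[of _ A]) auto
  qed
qed

lemma kneser:
  assumes W: "finite W" "card W \<ge> 2*r+1"
    and A1: "A1 \<subseteq> W" "card A1 = r" "\<not> P A1"
  shows "A0 \<subseteq> W \<Longrightarrow> card A0 = r \<Longrightarrow> P A0 \<Longrightarrow>
    \<exists>X Y. X \<subseteq> W \<and> Y \<subseteq> W \<and> card X = r \<and> card Y = r \<and> X \<inter> Y = {} \<and> \<not> P X \<and> P Y"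
proof (induction "card (A0 - A1)" arbitrary: A0 rule: less_induct)
  case (less A0)
  have fA0: "finite A0" and fA1: "finite A1" using less.prems A1 W by (auto intro: finite_subset)
  show ?case
  proof (cases "A0 - A1 = {}")
    case True
    then have "A0 \<subseteq> A1" by auto
    then have "A0 = A1" using card_subset_eq fA1 less.prems A1 by metis
    then show ?thesis using less.prems A1 by simp
  next
    case False
    then obtain x where x: "x \<in> A0" "x \<notin> A1" by auto
    have "A1 - A0 \<noteq> {}"
    proof
      assume "A1 - A0 = {}"
      then have "A1 \<subseteq> A0" by auto
      then have "A1 = A0" using card_subset_eq fA0 less.prems A1 by metis
      then show False using x by simp
    qed
    then obtain y where y: "y \<in> A1" "y \<notin> A0" by auto
    define C where "C = insert y (A0 - {x})"
    have CW: "C \<subseteq> W" using C_def y A1 less.prems by auto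
    have r0: "r > 0" using x fA0 less.prems card_gt_0_iff by auto
    have cC: "card C = r" using C_def y x fA0 less.prems r0 by (simp add: card_Diff_singleton)
    have "C - A1 = (A0 - A1) - {x}" using C_def y by auto
    then have lt: "card (C - A1) < card (A0 - A1)" using x fA0
      by (metis Diff_iff card_Diff1_less finite_Diff)
    show ?thesis
    proof (cases "P C")
      case True
      then show ?thesis using less.hyps[OF lt CW cC] by blast
    next
      case False
      have "A0 \<union> C = insert y A0" using C_def x by auto
      then have "card (A0 \<union> C) = r + 1" using y fA0 less.prems by simp
      then show ?thesis using kneser_close[OF W less.prems CW cC False] by simp
    qed
  qed
qed

lemma centers:
  assumes "finite T"
  shows "finite R \<Longrightarrow> T \<inter> R = {} \<Longrightarrow> card T * q \<le> card R \<Longrightarrow>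
    \<exists>M. finite M \<and> card M = card T \<and> pairwise disjnt M \<and> (\<forall>e\<in>M. e \<subseteq> T \<union> R \<and> card e = Suc q \<and> e \<inter> T \<noteq> {})"
  using assms
proof (induction T arbitrary: R rule: finite_induct)
  case empty
  then show ?case by (intro exI[of _ "{}"]) auto
next
  case (insert t T R)
  have "q \<le> card R" using insert.prems insert.hyps by simp
  then obtain D where D: "D \<subseteq> R" "card D = q" "finite D" by (meson obtain_subset_with_card_n)
  have c: "card (R - D) = card R - q" using D insert.prems by (simp add: card_Diff_subset)
  have "card T * q \<le> card (R - D)" using c insert.prems insert.hyps by simp
  moreover have "T \<inter> (R - D) = {}" using insert.prems by auto
  ultimately obtain M where M: "finite M" "card M = card T" "pairwise disjnt M"
     "\<forall>e\<in>M. e \<subseteq> T \<union> (R - D) \<and> card e = Suc q \<and> e \<inter> T \<noteq> {}"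
    using insert.IH[of "R - D"] insert.prems by auto
  have tR: "t \<notin> R" using insert.prems by auto
  have tM: "t \<notin> e" if "e \<in> M" for e using M that tR insert.hyps by blast
  have nM: "insert t D \<notin> M" using tM by auto
  have dj: "disjnt (insert t D) e" if "e \<in> M" for e
  proof -
    have "e \<subseteq> T \<union> (R - D)" using M(4) that by blast
    moreover have "D \<inter> T = {}" using D(1) insert.prems(2) by blast
    moreover have "t \<notin> e" using tM that .
    ultimately show ?thesis unfolding disjnt_def by blast
  qed
  show ?case
  proof (intro exI[of _ "insert (insert t D) M"] conjI)
    show "finite (insert (insert t D) M)" using M by simp
    show "card (insert (insert t D) M) = card (insert t T)" using M nM insert.hyps by simp
    show "pairwise disjnt (insert (insert t D) M)"
      using M(3) dj by (auto simp: pairwise_insert disjnt_sym)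
    show "\<forall>e\<in>insert (insert t D) M. e \<subseteq> insert t T \<union> R \<and> card e = Suc q \<and> e \<inter> insert t T \<noteq> {}"
    proof
      fix e assume "e \<in> insert (insert t D) M"
      then show "e \<subseteq> insert t T \<union> R \<and> card e = Suc q \<and> e \<inter> insert t T \<noteq> {}"
      proof
      assume "e = insert t D"
      moreover have "t \<notin> D" using D(1) tR by blast
      ultimately show ?thesis using D by auto
    next
      assume "e \<in> M" then show ?thesis using M by blast
    qed
    qed
  qed
qed



lemma big_matching:
  assumes kg: "kgraph k G" and M: "M \<subseteq> snd G" "finite M" "pairwise disjnt M"
    and ab: "a \<in> snd G" "b \<in> snd G" "a \<noteq> {}" "b \<noteq> {}" "a \<inter> b = {}"
    and dM: "\<forall>e\<in>M. e \<inter> a = {} \<and> e \<inter> b = {}"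
  shows "card M + 2 \<le> matching_number G"
proof -
  have aM: "a \<notin> M" using dM ab by auto
  have bM: "b \<notin> M" using dM ab by auto
  have anb: "a \<noteq> b" using ab by auto
  have "pairwise disjnt (insert a (insert b M))"
    using M(3) dM ab unfolding pairwise_insert disjnt_def by auto
  moreover have "insert a (insert b M) \<subseteq> snd G" using M ab by auto
  ultimately have "card (insert a (insert b M)) \<le> matching_number G"
    using mn_ge[OF kg] unfolding matching_def by blast
  moreover have "card (insert a (insert b M)) = card M + 2" using aM bM anb M by simp
  ultimately show ?thesis by simp
qed

lemma complete_case:
  assumes G: "G \<in> Mk k n s" and lt: "n < (s+1)*k"
  shows "snd G = {e. e \<subseteq> fst G \<and> card e = k}"
proof -
  let ?V = "fst G" let ?K = "{e. e \<subseteq> fst G \<and> card e = k}"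
  have H: "G \<in> Hk k n s" and cE: "card (snd G) = muk k n s" using G unfolding Mk_def by auto
  have kg: "kgraph k G" and cV: "card ?V = n" and mn: "matching_number G = s" using H unfolding Hk_def by auto
  have fV: "finite ?V" using kg unfolding kgraph_def by auto
  have EK: "snd G \<subseteq> ?K" using kg unfolding kgraph_def by auto
  have fK: "finite ?K" using fV by auto
  have kgK: "kgraph k (?V, ?K)" unfolding kgraph_def using fV by auto
  have "matching_number (?V, ?K) = s"
  proof (rule antisym)
    obtain M where M: "M \<subseteq> ?K" "matching M" "card M = matching_number (?V, ?K)"
      using mn_obt[OF kgK] by auto
    have fM: "finite M" using M fK finite_subset by blast
    have "card (\<Union>M) = sum card M"
      using M fV by (intro card_Union_disjoint) (auto simp: matching_def intro: finite_subset)
    also have "\<dots> = sum (\<lambda>_. k) M" using M(1) by (intro sum.cong) auto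
    also have "\<dots> = k * card M" by simp
    finally have "k * card M = card (\<Union>M)" by simp
    also have "\<dots> \<le> n" using M fV cV by (intro card_mono[of ?V, simplified cV]) auto
    finally have "k * card M \<le> n" .
    then have "k * card M < k * (s + 1)" using lt by (simp add: mult.commute)
    then have "card M < s + 1" by (meson mult_less_cancel1)
    then show "matching_number (?V, ?K) \<le> s" using M by simp
  next
    obtain M where M: "M \<subseteq> snd G" "matching M" "card M = s" using mn_obt[OF kg] mn by auto
    then show "s \<le> matching_number (?V, ?K)" using mn_ge[OF kgK, of M] EK by auto
  qed
  then have "(?V, ?K) \<in> Hk k n s" unfolding Hk_def using kgK cV by auto
  then have "card ?K \<le> card (snd G)" using card_le_muk cE by fastforce
  then show ?thesis using EK fK by (metis card_seteq)
qed

lemma star_bound: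
  assumes kg: "kgraph k G" and cV: "card (fst G) = n" and k: "k \<ge> 1" "n \<ge> k"
  shows "(n - 1) choose (k - 1) \<le> muk k n 1"
proof -
  let ?V = "fst G"
  have fV: "finite ?V" using kg unfolding kgraph_def by auto
  obtain v where v: "v \<in> ?V" using k cV by (metis all_not_in_conv card.empty le_zero_eq not_one_le_zero)
  define St where "St = {e. e \<subseteq> ?V \<and> card e = k \<and> v \<in> e}"
  define B where "B = {b. b \<subseteq> ?V - {v} \<and> card b = k - 1}"
  have StB: "St = insert v ` B"
  proof
    show "St \<subseteq> insert v ` B"
    proof
      fix e assume e: "e \<in> St"
      then have fe: "finite e" using fV unfolding St_def by (auto intro: finite_subset)
      have "e - {v} \<in> B" using e fe unfolding St_def B_def by auto
      moreover have "e = insert v (e - {v})" using e unfolding St_def by auto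
      ultimately show "e \<in> insert v ` B" by blast
    qed
  next
    show "insert v ` B \<subseteq> St"
    proof
      fix e assume "e \<in> insert v ` B"
      then obtain b where b: "b \<in> B" "e = insert v b" by auto
      have fb: "finite b" using b fV unfolding B_def by (auto intro: finite_subset)
      have "v \<notin> b" using b unfolding B_def by auto
      then have "card e = k" using b fb k unfolding B_def by simp
      then show "e \<in> St" using b v unfolding St_def B_def by auto
    qed
  qed
  have inj: "inj_on (insert v) B"
  proof (rule inj_onI)
    fix x y assume "x \<in> B" "y \<in> B" "insert v x = insert v y"
    moreover have "v \<notin> x" "v \<notin> y" using \<open>x \<in> B\<close> \<open>y \<in> B\<close> unfolding B_def by auto
    ultimately show "x = y" by (simp add: insert_ident)
  qed
  have cSt: "card St = (n - 1) choose (k - 1)"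
  proof -
    have "card St = card B" using StB inj card_image by metis
    also have "\<dots> = card (?V - {v}) choose (k - 1)" unfolding B_def using fV by (intro n_subsets) auto
    finally show ?thesis using cV v fV by simp
  qed
  have kgS: "kgraph k (?V, St)" unfolding kgraph_def St_def using fV by auto
  have "matching_number (?V, St) = 1"
  proof (rule antisym)
    obtain M where M: "M \<subseteq> St" "matching M" "card M = matching_number (?V, St)"
      using mn_obt[OF kgS] by auto
    have fSt: "finite St" using kg_fin[OF kgS] by simp
    have "finite M" using M fSt finite_subset by blast
    moreover have "\<forall>a1\<in>M. \<forall>a2\<in>M. a1 = a2"
    proof (intro ballI)
      fix a1 a2 assume "a1 \<in> M" "a2 \<in> M"
      moreover have "v \<in> a1" "v \<in> a2" using M \<open>a1 \<in> M\<close> \<open>a2 \<in> M\<close> unfolding St_def by auto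
      ultimately show "a1 = a2" using M(2) unfolding matching_def pairwise_def disjnt_def by blast
    qed
    ultimately have "card M \<le> Suc 0" using card_le_Suc0_iff_eq by blast
    then show "matching_number (?V, St) \<le> 1" using M by simp
  next
    have "card (?V - {v}) \<ge> k - 1" using cV v fV k by simp
    then obtain b where "b \<subseteq> ?V - {v}" "card b = k - 1" by (meson obtain_subset_with_card_n)
    then have "b \<in> B" unfolding B_def by auto
    then have "insert v b \<in> St" using StB by auto
    then have "card {insert v b} \<le> matching_number (?V, St)"
      using mn_ge[OF kgS, of "{insert v b}"] unfolding matching_def by auto
    then show "1 \<le> matching_number (?V, St)" by simp
  qed
  then have "(?V, St) \<in> Hk k n 1" unfolding Hk_def using kgS cV by auto
  then show ?thesis using card_le_muk cSt by fastforce
qed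



lemma arith1: "(s::nat) \<ge> 2 \<Longrightarrow> k \<ge> 2 \<Longrightarrow> k + s \<le> s * k"
proof -
  assume "s \<ge> 2" "k \<ge> 2"
  then obtain a b where "s = a + 2" "k = b + 2" by (metis add.commute le_Suc_ex)
  then show ?thesis by (simp add: algebra_simps)
qed

lemma cov_part:
  assumes k: "k \<ge> 2" and n2: "n \<noteq> 2*k" and G: "(V,E) \<in> Mk k n s"
    and iV: "i \<in> V" and jV: "j \<in> V" and ij: "i \<noteq> j"
    and S: "S \<subseteq> V" "card S = s" and E': "shE i j E = {e. e \<subseteq> V \<and> card e = k \<and> e \<inter> S \<noteq> {}}"
  shows "(V,E) \<in> Cov k n s"
proof -
  have H: "(V,E) \<in> Hk k n s" and cE: "card E = muk k n s" using G unfolding Mk_def by auto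
  have kg: "kgraph k (V,E)" and cV: "card V = n" and mn: "matching_number (V,E) = s"
    using H unfolding Hk_def by auto
  have fV: "finite V" and EK: "\<And>e. e \<in> E \<Longrightarrow> e \<subseteq> V \<and> card e = k" using kg unfolding kgraph_def by auto
  have fS: "finite S" using S fV finite_subset by blast
  have goal: "(V,E) \<in> Cov k n s" if "S' \<subseteq> V" "card S' = s" "E = {e. e \<subseteq> V \<and> card e = k \<and> e \<inter> S' \<noteq> {}}" for S'
    unfolding Cov_def using that fV cV by blast
  have cardA: "card (insert i A) = k" "card (insert j A) = k"
    if "A \<subseteq> V" "card A = k - 1" "i \<notin> A" "j \<notin> A" for A
  proof -
    have "finite A" using that fV by (auto intro: finite_subset)
    then show "card (insert i A) = k" "card (insert j A) = k" using that k by auto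
  qed
  have cardA': "card A = k - 1" "finite A" if "card (insert x A) = k" "x \<notin> A" "insert x A \<subseteq> V" for x A
  proof -
    show "finite A" using that fV by (auto intro: finite_subset)
    then show "card A = k - 1" using that by simp
  qed
  show ?thesis
  proof (cases "(i \<in> S \<longleftrightarrow> j \<in> S) \<or> (i \<notin> S \<and> j \<in> S)")
    case True
    have "shE i j E = E"
    proof (rule shE_sym[OF ij])
      fix A assume A: "i \<notin> A" "j \<notin> A"
      have c: "card (insert i A) = card (insert j A)" using card_ins_eq A .
      show "insert i A \<in> shE i j E \<longleftrightarrow> insert j A \<in> shE i j E"
      proof
        assume "insert i A \<in> shE i j E"
        then show "insert j A \<in> shE i j E" unfolding E' using True c jV by auto
      next
        assume "insert j A \<in> shE i j E"
        then show "insert i A \<in> shE i j E" using sh_ba[OF ij A] by blast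
      qed
    qed
    then show ?thesis using goal[OF S] E' by simp
  next
    case False
    then have iS: "i \<in> S" and jS: "j \<notin> S" by auto
    have s1: "s \<ge> 1" using iS fS S by (metis One_nat_def Suc_leI card_gt_0_iff empty_iff)
    have exact: "(insert i A \<in> E \<or> insert j A \<in> E) \<and> \<not> (insert j A \<in> E \<and> insert i A \<in> E)"
      if "A \<subseteq> V" "card A = k - 1" "i \<notin> A" "j \<notin> A" "A \<inter> S = {}" for A
    proof -
      have "insert i A \<in> shE i j E" unfolding E' using that cardA iS iV by auto
      moreover have "insert j A \<notin> shE i j E" unfolding E' using that jS by auto
      ultimately show ?thesis using sh_a[OF ij that(3,4)] sh_b[OF ij that(3,4)] by blast
    qed
    have both: "insert i A \<in> E \<and> insert j A \<in> E"
      if "A \<subseteq> V" "card A = k - 1" "i \<notin> A" "j \<notin> A" "A \<inter> S \<noteq> {}" for A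
    proof -
      have "insert j A \<in> shE i j E" unfolding E' using that cardA jV by auto
      then show ?thesis using sh_b[OF ij that(3,4)] by blast
    qed
    show ?thesis
    proof (cases "n < (s+1)*k")
      case True
      have EKc: "E = {e. e \<subseteq> V \<and> card e = k}" using complete_case[OF G True] by simp
      have "shE i j E = E"
      proof (rule shE_id)
        fix A assume A: "i \<notin> A" "j \<notin> A" "insert j A \<in> E"
        then have "insert j A \<subseteq> V" "card (insert j A) = k" using EK by auto
        then show "insert i A \<in> E" unfolding EKc using A card_ins_eq[OF A(1,2)] iV by auto
      qed
      then show ?thesis using goal[OF S] E' by simp
    next
      case False
      then have nge: "(s+1)*k \<le> n" by simp
      define W where "W = V - S - {j}"
      have fW: "finite W" using fV W_def by auto
      have cW: "card W = n - s - 1"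
      proof -
        have "card (V - S) = n - s" using S cV fS by (simp add: card_Diff_subset)
        moreover have "j \<in> V - S" using jV jS by simp
        ultimately show ?thesis unfolding W_def using fV by (simp add: card_Diff_singleton)
      qed
      have bigW: "card W \<ge> 2*(k-1)+1"
      proof (cases "s = 1")
        case True
        then have "n \<ge> 2*k" using nge by simp
        then have "n > 2*k" using n2 by simp
        then show ?thesis using cW True k by simp
      next
        case False
        then have "s \<ge> 2" using s1 by simp
        then have "k + s \<le> s * k" using arith1 k by simp
        then show ?thesis using cW nge k by (simp add: algebra_simps)
      qed
      define P where "P A \<longleftrightarrow> insert j A \<in> E" for A
      have Wprops: "A \<subseteq> V" "i \<notin> A" "j \<notin> A" "A \<inter> S = {}" if "A \<subseteq> W" for A
        using that iS unfolding W_def by auto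
      show ?thesis
      proof (cases "(\<exists>A0. A0 \<subseteq> W \<and> card A0 = k - 1 \<and> P A0) \<and> (\<exists>A1. A1 \<subseteq> W \<and> card A1 = k - 1 \<and> \<not> P A1)")
        case True
        then obtain A0 A1 where A01: "A0 \<subseteq> W" "card A0 = k - 1" "P A0" "A1 \<subseteq> W" "card A1 = k - 1" "\<not> P A1"
          by blast
        obtain X Y where XY: "X \<subseteq> W" "Y \<subseteq> W" "card X = k - 1" "card Y = k - 1" "X \<inter> Y = {}" "\<not> P X" "P Y"
          using kneser[OF fW bigW A01(4,5,6) A01(1,2,3)] by blast
        have aE: "insert i X \<in> E" using exact[of X] XY(1,3,6) Wprops[OF XY(1)] unfolding P_def
          by blast
        have bE: "insert j Y \<in> E" using XY(7) unfolding P_def .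
        define T0 where "T0 = S - {i}"
        define R where "R = W - (X \<union> Y)"
        have fT0: "finite T0" using fS T0_def by simp
        have cT0: "card T0 = s - 1" using T0_def iS fS S by simp
        have fR: "finite R" using fW R_def by simp
        have cXY: "card (X \<union> Y) = 2*(k-1)" using XY fW by (simp add: card_Un_disjoint finite_subset)
        have cR: "card R = card W - 2*(k-1)" unfolding R_def using XY fW cXY
          by (simp add: card_Diff_subset finite_subset)
        have TR: "T0 \<inter> R = {}" unfolding T0_def R_def W_def by auto
        have "card T0 * (k - 1) \<le> card R"
        proof -
          obtain t where t: "s = t + 1" using s1 by (cases s) auto
          obtain q where q: "k = q + 1" using k by (cases k) auto
          note tq = t q
          show ?thesis using cR cW cT0 nge unfolding tq by (simp add: algebra_simps)
        qed
        then obtain M where M: "finite M" "card M = card T0" "pairwise disjnt M"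
          "\<forall>e\<in>M. e \<subseteq> T0 \<union> R \<and> card e = Suc (k - 1) \<and> e \<inter> T0 \<noteq> {}"
          using centers[OF fT0 fR TR] by blast
        have ME: "M \<subseteq> E"
        proof
          fix e assume e: "e \<in> M"
          then have e1: "e \<subseteq> T0 \<union> R" "card e = k" "e \<inter> T0 \<noteq> {}" using M k by auto
          have "i \<notin> e" "j \<notin> e" using e1(1) jS iS unfolding T0_def R_def W_def by auto
          moreover have "e \<in> shE i j E" unfolding E' using e1 S unfolding T0_def R_def W_def by auto
          ultimately show "e \<in> E" using sh_nn by blast
        qed
        have dM: "\<forall>e\<in>M. e \<inter> insert i X = {} \<and> e \<inter> insert j Y = {}"
        proof
          fix e assume "e \<in> M"
          then have "e \<subseteq> T0 \<union> R" using M by auto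
          then show "e \<inter> insert i X = {} \<and> e \<inter> insert j Y = {}"
            using XY(1,2) jS iS unfolding T0_def R_def W_def by auto
        qed
        have "insert i X \<inter> insert j Y = {}" using XY ij Wprops[OF XY(1)] Wprops[OF XY(2)] by auto
        then have "card M + 2 \<le> matching_number (V,E)"
          using big_matching[OF kg _ M(1) M(3) _ _ _ _ _ dM] ME aE bE by auto
        then show ?thesis using mn M(2) cT0 s1 by simp
      next
        case False
        then consider (none) "\<forall>A. A \<subseteq> W \<and> card A = k - 1 \<longrightarrow> \<not> P A"
          | (all) "\<forall>A. A \<subseteq> W \<and> card A = k - 1 \<longrightarrow> P A" by blast
        then show ?thesis
        proof cases
          case none
          have "shE i j E = E"
          proof (rule shE_id)
            fix A assume A: "i \<notin> A" "j \<notin> A" "insert j A \<in> E"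
            then have bV: "insert j A \<subseteq> V" "card (insert j A) = k" using EK by auto
            then have cA: "card A = k - 1" using cardA' A by blast
            show "insert i A \<in> E"
            proof (cases "A \<inter> S = {}")
              case True
              then have "A \<subseteq> W" unfolding W_def using bV A by auto
              then show ?thesis using none cA A(3) unfolding P_def by blast
            next
              case False
              then show ?thesis using both[OF _ cA A(1,2)] bV by auto
            qed
          qed
          then show ?thesis using goal[OF S] E' by simp
        next
          case all
          define S' where "S' = insert j (S - {i})"
          have S'V: "S' \<subseteq> V" using S jV S'_def by auto
          have cS': "card S' = s" using S'_def S iS jS fS s1 by simp
          have "E = {e. e \<subseteq> V \<and> card e = k \<and> e \<inter> S' \<noteq> {}}"
          proof (intro set_eqI iffI)
            fix e assume e: "e \<in> E"
            then have eV: "e \<subseteq> V" "card e = k" using EK by auto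
            have "e \<inter> S' \<noteq> {}"
            proof (cases "j \<in> e")
              case True then show ?thesis using S'_def by auto
            next
              case jn: False
              show ?thesis
              proof (cases "i \<in> e")
                case False
                then have "e \<in> shE i j E" using sh_nn jn e by blast
                then show ?thesis unfolding E' S'_def using False by auto
              next
                case True
                define A where "A = e - {i}"
                have eA: "e = insert i A" "i \<notin> A" "j \<notin> A" using A_def True jn by auto
                have cA: "card A = k - 1" using cardA' eA eV by blast
                have "A \<inter> S \<noteq> {}"
                proof
                  assume AS: "A \<inter> S = {}"
                  have "A \<subseteq> W" using AS eA eV unfolding W_def by auto
                  then have "insert j A \<in> E" using all cA unfolding P_def by blast
                  then show False using exact[OF _ cA eA(2,3) AS] eA e eV by auto
                qed
                then show ?thesis unfolding S'_def using eA by auto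
              qed
            qed
            then show "e \<in> {e. e \<subseteq> V \<and> card e = k \<and> e \<inter> S' \<noteq> {}}" using eV by auto
          next
            fix e assume "e \<in> {e. e \<subseteq> V \<and> card e = k \<and> e \<inter> S' \<noteq> {}}"
            then have e: "e \<subseteq> V" "card e = k" "e \<inter> S' \<noteq> {}" by auto
            show "e \<in> E"
            proof (cases "i \<in> e"; cases "j \<in> e")
              assume "i \<in> e" "j \<in> e"
              then have "e \<in> shE i j E" unfolding E' using e iS by auto
              then show ?thesis using sh_bb[OF ij] \<open>i \<in> e\<close> \<open>j \<in> e\<close> by blast
            next
              assume "i \<notin> e" "j \<notin> e"
              then have "e \<in> shE i j E" unfolding E' using e unfolding S'_def by auto
              then show ?thesis using sh_nn \<open>i \<notin> e\<close> \<open>j \<notin> e\<close> by blast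
            next
              assume ie: "i \<notin> e" and je: "j \<in> e"
              define A where "A = e - {j}"
              have eA: "e = insert j A" "i \<notin> A" "j \<notin> A" using A_def ie je by auto
              have cA: "card A = k - 1" using cardA' eA e by blast
              show ?thesis
              proof (cases "A \<inter> S = {}")
                case True
                then have "A \<subseteq> W" unfolding W_def using e eA by auto
                then show ?thesis using all cA eA unfolding P_def by blast
              next
                case False
                then show ?thesis using both[OF _ cA eA(2,3)] e eA by auto
              qed
            next
              assume ie: "i \<in> e" and je: "j \<notin> e"
              define A where "A = e - {i}"
              have eA: "e = insert i A" "i \<notin> A" "j \<notin> A" using A_def ie je by auto
              have cA: "card A = k - 1" using cardA' eA e by blast
              have "A \<inter> S \<noteq> {}" using e(3) eA ij unfolding S'_def by auto
              then show ?thesis using both[OF _ cA eA(2,3)] e eA by auto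
            qed
          qed
          then show ?thesis using goal[OF S'V cS'] by simp
        qed
      qed
    qed
  qed
qed



lemma binom_ineq:
  assumes k: "k \<ge> 2" and n: "n > 2*k"
  shows "(2*k - 1) choose k < (n - 1) choose (k - 1)"
proof -
  obtain q where q: "k = q + 2" using k by (metis add.commute le_Suc_ex)
  have 1: "(2*k - 1) choose k = (2*q+3) choose (q+1)"
  proof -
    have "(2*q+3) choose (q+2) = (2*q+3) choose ((2*q+3) - (q+2))" by (rule binomial_symmetric) simp
    then show ?thesis using q by (simp add: numeral_eq_Suc)
  qed
  have 2: "((2*q+4) choose (q+1)) = ((2*q+3) choose q) + ((2*q+3) choose (q+1))"
    using binomial_Suc_Suc[of "2*q+3" q] by (simp add: numeral_eq_Suc)
  have 3: "(2*q+3) choose q > 0" by simp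
  have 4: "(2*q+4) choose (q+1) \<le> (n - 1) choose (k - 1)"
    using choose_mono_top[of "2*q+4" "n - 1" "q+1"] n q by simp
  show ?thesis using 1 2 3 4 by linarith
qed

lemma cl_part:
  assumes k: "k \<ge> 2" and n2: "n \<noteq> 2*k" and G: "(V,E) \<in> Mk k n s"
    and iV: "i \<in> V" and jV: "j \<in> V" and ij: "i \<noteq> j"
    and T: "T \<subseteq> V" "card T = k*s + k - 1" and E': "shE i j E = {e. e \<subseteq> T \<and> card e = k}"
  shows "(V,E) \<in> Cl k n s"
proof -
  have H: "(V,E) \<in> Hk k n s" and cE: "card E = muk k n s" using G unfolding Mk_def by auto
  have kg: "kgraph k (V,E)" and cV: "card V = n" and mn: "matching_number (V,E) = s"
    using H unfolding Hk_def by auto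
  have fV: "finite V" and EK: "\<And>e. e \<in> E \<Longrightarrow> e \<subseteq> V \<and> card e = k" using kg unfolding kgraph_def by auto
  have fT: "finite T" using T fV finite_subset by blast
  have fE: "finite E" using kg_fin[OF kg] by simp
  have goal: "(V,E) \<in> Cl k n s" if "T' \<subseteq> V" "card T' = k*s + k - 1" "E = {e. e \<subseteq> T' \<and> card e = k}" for T'
    unfolding Cl_def using that fV cV by blast
  have cardA': "card A = k - 1" "finite A" if "card (insert x A) = k" "x \<notin> A" "insert x A \<subseteq> V" for x A
  proof -
    show "finite A" using that fV by (auto intro: finite_subset)
    then show "card A = k - 1" using that by simp
  qed
  show ?thesis
  proof (cases "i \<in> T \<longrightarrow> j \<in> T")
    case True
    have "shE i j E = E"
    proof (rule shE_sym[OF ij])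
      fix A assume A: "i \<notin> A" "j \<notin> A"
      have c: "card (insert i A) = card (insert j A)" using card_ins_eq A .
      show "insert i A \<in> shE i j E \<longleftrightarrow> insert j A \<in> shE i j E"
      proof
        assume "insert i A \<in> shE i j E"
        then show "insert j A \<in> shE i j E" unfolding E' using True c by auto
      next
        assume "insert j A \<in> shE i j E"
        then show "insert i A \<in> shE i j E" using sh_ba[OF ij A] by blast
      qed
    qed
    then show ?thesis using goal[OF T] E' by simp
  next
    case False
    then have iT: "i \<in> T" and jT: "j \<notin> T" by auto
    define W where "W = T - {i}"
    have fW: "finite W" using fT W_def by auto
    have cW: "card W = k*s + k - 2" using T iT fT unfolding W_def by (simp add: card_Diff_singleton)
    have WT: "A \<subseteq> T" "i \<notin> A" "j \<notin> A" if "A \<subseteq> W" for A using that jT unfolding W_def by auto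
    have exact: "(insert i A \<in> E \<or> insert j A \<in> E) \<and> \<not> (insert j A \<in> E \<and> insert i A \<in> E)"
      if "A \<subseteq> W" "card A = k - 1" for A
    proof -
      have "finite A" using that fW finite_subset by blast
      then have "insert i A \<in> shE i j E" unfolding E' using that WT[OF that(1)] iT k by auto
      moreover have "insert j A \<notin> shE i j E" unfolding E' using jT by auto
      ultimately show ?thesis using sh_a[OF ij WT(2,3)[OF that(1)]] sh_b[OF ij WT(2,3)[OF that(1)]] by blast
    qed
    have bW: "A \<subseteq> W" if "i \<notin> A" "j \<notin> A" "insert j A \<in> E" for A
    proof -
      have "insert i A \<in> shE i j E" using sh_a[OF ij that(1,2)] that(3) by blast
      then show ?thesis unfolding E' W_def using that by auto
    qed
    have s1: "s \<noteq> 1"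
    proof
      assume s1: "s = 1"
      have "T \<subset> V" using T jT jV by auto
      then have "card T < n" using psubset_card_mono fV cV by metis
      then have "n > 2*k" using T s1 n2 by simp
      have "card E = card (shE i j E)" using shE_card[OF fE ij] by simp
      also have "\<dots> = (2*k - 1) choose k" unfolding E' using n_subsets[OF fT] T s1 by (simp add: mult_2)
      also have "\<dots> < (n - 1) choose (k - 1)" using binom_ineq k \<open>n > 2*k\<close> by simp
      also have "\<dots> \<le> muk k n 1" using star_bound[OF kg _ _] cV k \<open>n > 2*k\<close> by simp
      finally show False using cE s1 by simp
    qed
    define P where "P A \<longleftrightarrow> insert j A \<in> E" for A
    show ?thesis
    proof (cases "(\<exists>A0. A0 \<subseteq> W \<and> card A0 = k - 1 \<and> P A0) \<and> (\<exists>A1. A1 \<subseteq> W \<and> card A1 = k - 1 \<and> \<not> P A1)")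
      case True
      then obtain A0 A1 where A01: "A0 \<subseteq> W" "card A0 = k - 1" "P A0" "A1 \<subseteq> W" "card A1 = k - 1" "\<not> P A1"
        by blast
      have "s \<noteq> 0"
      proof
        assume "s = 0"
        then have "card W = k - 2" using cW by simp
        moreover have "card A0 \<le> card W" using A01 fW card_mono by blast
        ultimately show False using A01 k by simp
      qed
      then have s2: "s \<ge> 2" using s1 by simp
      then have "k + s \<le> s * k" using arith1 k by simp
      then have bigW: "card W \<ge> 2*(k-1)+1" using cW k s2 by (simp add: algebra_simps)
      obtain X Y where XY: "X \<subseteq> W" "Y \<subseteq> W" "card X = k - 1" "card Y = k - 1" "X \<inter> Y = {}" "\<not> P X" "P Y"
        using kneser[OF fW bigW A01(4,5,6) A01(1,2,3)] by blast
      have aE: "insert i X \<in> E" using exact[of X] XY(1,3,6) unfolding P_def by blast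
      have bE: "insert j Y \<in> E" using XY(7) unfolding P_def .
      define R0 where "R0 = W - (X \<union> Y)"
      have fR0: "finite R0" using fW R0_def by simp
      have cXY: "card (X \<union> Y) = 2*(k-1)" using XY fW by (simp add: card_Un_disjoint finite_subset)
      have cR0: "card R0 = card W - 2*(k-1)" unfolding R0_def using XY fW cXY
        by (simp add: card_Diff_subset finite_subset)
      obtain t where t: "s = t + 1" using s2 by (cases s) auto
      obtain q where q: "k = q + 1" using k by (cases k) auto
      have cR0': "card R0 = (q+1)*t" using cR0 cW unfolding t q by (simp add: algebra_simps)
      then obtain T0 where T0: "T0 \<subseteq> R0" "card T0 = t" "finite T0"
        by (metis le_add2 mult_Suc Suc_eq_plus1 add.commute obtain_subset_with_card_n)
      define R where "R = R0 - T0"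
      have fR: "finite R" using fR0 R_def by simp
      have cR: "card R = q*t" using cR0' T0 fR0 unfolding R_def by (simp add: card_Diff_subset)
      have TR: "T0 \<inter> R = {}" unfolding R_def by auto
      have "card T0 * (k - 1) \<le> card R" using cR T0 q by simp
      then obtain M where M: "finite M" "card M = card T0" "pairwise disjnt M"
        "\<forall>e\<in>M. e \<subseteq> T0 \<union> R \<and> card e = Suc (k - 1) \<and> e \<inter> T0 \<noteq> {}"
        using centers[OF T0(3) fR TR] by blast
      have MR: "e \<subseteq> R0" if "e \<in> M" for e using M that T0 unfolding R_def by blast
      have ME: "M \<subseteq> E"
      proof
        fix e assume e: "e \<in> M"
        then have e1: "e \<subseteq> R0" "card e = k" using M MR k by auto
        have "i \<notin> e" "j \<notin> e" using e1(1) jT unfolding R0_def W_def by auto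
        moreover have "e \<in> shE i j E" unfolding E' using e1 unfolding R0_def W_def by auto
        ultimately show "e \<in> E" using sh_nn by blast
      qed
      have dM: "\<forall>e\<in>M. e \<inter> insert i X = {} \<and> e \<inter> insert j Y = {}"
      proof
        fix e assume "e \<in> M"
        then have "e \<subseteq> R0" using MR by auto
        then show "e \<inter> insert i X = {} \<and> e \<inter> insert j Y = {}"
          using jT unfolding R0_def W_def by auto
      qed
      have "insert i X \<inter> insert j Y = {}" using XY ij WT[OF XY(1)] WT[OF XY(2)] by auto
      then have "card M + 2 \<le> matching_number (V,E)"
        using big_matching[OF kg _ M(1) M(3) _ _ _ _ _ dM] ME aE bE by auto
      then show ?thesis using mn M(2) T0 t by simp
    next
      case False
      then consider (none) "\<forall>A. A \<subseteq> W \<and> card A = k - 1 \<longrightarrow> \<not> P A"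
        | (all) "\<forall>A. A \<subseteq> W \<and> card A = k - 1 \<longrightarrow> P A" by blast
      then show ?thesis
      proof cases
        case none
        have "shE i j E = E"
        proof (rule shE_id)
          fix A assume A: "i \<notin> A" "j \<notin> A" "insert j A \<in> E"
          then have bV: "insert j A \<subseteq> V" "card (insert j A) = k" using EK by auto
          then have cA: "card A = k - 1" using cardA' A by blast
          have "A \<subseteq> W" using bW A by blast
          then show "insert i A \<in> E" using none cA A(3) unfolding P_def by blast
        qed
        then show ?thesis using goal[OF T] E' by simp
      next
        case all
        define T' where "T' = insert j (T - {i})"
        have T'V: "T' \<subseteq> V" using T jV T'_def by auto
        have cT': "card T' = k*s + k - 1" using T'_def T iT jT fT k by (simp add: card_Diff_singleton)
        have "E = {e. e \<subseteq> T' \<and> card e = k}"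
        proof (intro set_eqI iffI)
          fix e assume e: "e \<in> E"
          then have eV: "e \<subseteq> V" "card e = k" using EK by auto
          have ie: "i \<notin> e"
          proof
            assume ie: "i \<in> e"
            show False
            proof (cases "j \<in> e")
              case True
              then have "e \<in> shE i j E" using sh_bb[OF ij ie] e by blast
              then show False unfolding E' using True jT by auto
            next
              case False
              define A where "A = e - {i}"
              have eA: "e = insert i A" "i \<notin> A" "j \<notin> A" using A_def ie False by auto
              have cA: "card A = k - 1" using cardA' eA eV by blast
              have "e \<in> shE i j E" using sh_a[OF ij eA(2,3)] e eA by blast
              then have "A \<subseteq> W" unfolding E' W_def using eA by auto
              then have "insert j A \<in> E" using all cA unfolding P_def by blast
              then show False using exact[OF \<open>A \<subseteq> W\<close> cA] e eA by auto
            qed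
          qed
          have "e \<subseteq> T'"
          proof (cases "j \<in> e")
            case False
            then have "e \<in> shE i j E" using sh_nn ie e by blast
            then show ?thesis unfolding E' T'_def using ie by auto
          next
            case True
            define A where "A = e - {j}"
            have eA: "e = insert j A" "i \<notin> A" "j \<notin> A" using A_def ie True by auto
            have "A \<subseteq> W" using bW eA e by blast
            then show ?thesis unfolding T'_def W_def using eA by auto
          qed
          then show "e \<in> {e. e \<subseteq> T' \<and> card e = k}" using eV by auto
        next
          fix e assume "e \<in> {e. e \<subseteq> T' \<and> card e = k}"
          then have e: "e \<subseteq> T'" "card e = k" by auto
          have ie: "i \<notin> e" using e ij unfolding T'_def by auto
          show "e \<in> E"
          proof (cases "j \<in> e")
            case False
            then have "e \<in> shE i j E" unfolding E' using e unfolding T'_def by auto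
            then show ?thesis using sh_nn ie False by blast
          next
            case True
            define A where "A = e - {j}"
            have eA: "e = insert j A" "i \<notin> A" "j \<notin> A" using A_def ie True by auto
            have AW: "A \<subseteq> W" using e eA unfolding T'_def W_def by auto
            have "finite A" using AW fW finite_subset by blast
            then have cA: "card A = k - 1" using e eA by simp
            then show ?thesis using all AW eA unfolding P_def by blast
          qed
        qed
        then show ?thesis using goal[OF T'V cT'] by simp
      qed
    qed
  qed
qed


theorem lemma5:
  fixes k n s i j :: nat and G :: hgraph
  assumes "k \<ge> 2" and "n \<noteq> 2 * k" and "G \<in> Mk k n s"
    and "i \<in> fst G" and "j \<in> fst G" and "i < j"
  shows "(shift i j G \<in> Cov k n s \<longrightarrow> G \<in> Cov k n s) \<and>
         (shift i j G \<in> Cl k n s \<longrightarrow> G \<in> Cl k n s)"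
proof -
  obtain V E where G: "G = (V,E)" by (cases G)
  have sh: "shift i j G = (V, shE i j E)" using shift_eq G by simp
  have ij: "i \<noteq> j" using assms(6) by simp
  have GM: "(V,E) \<in> Mk k n s" and iV: "i \<in> V" and jV: "j \<in> V" using assms G by auto
  show ?thesis
  proof (intro conjI impI)
    assume "shift i j G \<in> Cov k n s"
    then obtain S where S: "S \<subseteq> V" "card S = s" "shE i j E = {e. e \<subseteq> V \<and> card e = k \<and> e \<inter> S \<noteq> {}}"
      unfolding sh Cov_def by auto
    show "G \<in> Cov k n s" using cov_part[OF assms(1,2) GM iV jV ij S] G by simp
  next
    assume "shift i j G \<in> Cl k n s"
    then obtain T where T: "T \<subseteq> V" "card T = k * s + k - 1" "shE i j E = {e. e \<subseteq> T \<and> card e = k}"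
      unfolding sh Cl_def by auto
    show "G \<in> Cl k n s" using cl_part[OF assms(1,2) GM iV jV ij T] G by simp
  qed
qed

end
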